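(* Let $G$ be a finite solvable group, $N$ a normal subgroup of $G$, $a\in G$, and $C=\mathbf{C}_G(a)$. Write $\bar G=G/N$ and $\bar g=gN$ for $g\in G$, and set $C_N=\{g\in G\mid [a,g]\in N\}$. Then $C_N$ is a subgroup of $G$ containing $CN$, $C_N/N=\mathbf{C}_{\bar G}(\bar a)$, and $$\eta\big(\bar a^{\bar G}(\bar a^{-1})^{\bar G}\big)+\eta\big((a^{C_N}(a^{-1})^{C_N})^G\big)-1\le \eta\big(a^G(a^{-1})^G\big).$$
   Context: $x^g=g^{-1}xg$ and $[x,g]=x^{-1}g^{-1}xg$. For a subgroup $K$ and element $x$, $x^K=\{x^k\mid k\in K\}$; products of sets are $XY=\{xy\mid x\in X,y\in Y\}$; for a subset $X\subseteq G$, $X^G=\bigcup_{g\in G}X^g$ is the smallest $G$-invariant set containing $X$. For a nonempty subset $X$ of a group $L$ that is $L$-invariant, $\eta(X)$ is the number of distinct conjugacy classes of $L$ whose union is $X$ (here $\eta$ of subsets of $G$ counts $G$-classes and $\eta$ of subsets of $\bar G$ counts $\bar G$-classes). *)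

theory Defs
  imports "HOL-Algebra.Algebra"
begin

definition conjg :: "('a, 'b) monoid_scheme \<Rightarrow> 'a \<Rightarrow> 'a \<Rightarrow> 'a" where
  "conjg G x g = inv\<^bsub>G\<^esub> g \<otimes>\<^bsub>G\<^esub> x \<otimes>\<^bsub>G\<^esub> g"

definition commg :: "('a, 'b) monoid_scheme \<Rightarrow> 'a \<Rightarrow> 'a \<Rightarrow> 'a" where
  "commg G x g = inv\<^bsub>G\<^esub> x \<otimes>\<^bsub>G\<^esub> inv\<^bsub>G\<^esub> g \<otimes>\<^bsub>G\<^esub> x \<otimes>\<^bsub>G\<^esub> g"

definition conj_set :: "('a, 'b) monoid_scheme \<Rightarrow> 'a \<Rightarrow> 'a set \<Rightarrow> 'a set" where
  "conj_set G x K = (\<lambda>k. conjg G x k) ` K"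

definition conjcl :: "('a, 'b) monoid_scheme \<Rightarrow> 'a set \<Rightarrow> 'a set" where
  "conjcl G S = {conjg G x g | x g. x \<in> S \<and> g \<in> carrier G}"

definition centralizer :: "('a, 'b) monoid_scheme \<Rightarrow> 'a \<Rightarrow> 'a set" where
  "centralizer G a = {g \<in> carrier G. g \<otimes>\<^bsub>G\<^esub> a = a \<otimes>\<^bsub>G\<^esub> g}"

(* eta(X): number of conjugacy classes of G contained in (whose union is) the G-invariant set X *)
definition eta :: "('a, 'b) monoid_scheme \<Rightarrow> 'a set \<Rightarrow> nat" where
  "eta G S = card {conj_set G x (carrier G) | x. x \<in> S}"

end

theory Submission
  imports Defs
begin

lemma (in group) conjg_closed[simp]: "x \<in> carrier G \<Longrightarrow> g \<in> carrier G \<Longrightarrow> conjg G x g \<in> carrier G"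
  unfolding conjg_def by simp

lemma (in group) conjg_mult: "x \<in> carrier G \<Longrightarrow> y \<in> carrier G \<Longrightarrow> g \<in> carrier G \<Longrightarrow>
  conjg G (x \<otimes> y) g = conjg G x g \<otimes> conjg G y g"
  unfolding conjg_def by (simp add: m_assoc) (metis inv_closed inv_solve_left m_closed)

lemma (in group) conjg_conjg: "x \<in> carrier G \<Longrightarrow> c \<in> carrier G \<Longrightarrow> g \<in> carrier G \<Longrightarrow>
  conjg G (conjg G x c) g = conjg G x (c \<otimes> g)"
  unfolding conjg_def by (simp add: m_assoc inv_mult_group)

lemma (in group) conjg_one: "g \<in> carrier G \<Longrightarrow> conjg G \<one> g = \<one>"
  unfolding conjg_def by simp

lemma (in group) conjg_comm: "x \<in> carrier G \<Longrightarrow> k \<in> carrier G \<Longrightarrow> k \<otimes> x = x \<otimes> k \<Longrightarrow> conjg G x k = x"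
  unfolding conjg_def by (metis inv_closed inv_solve_left m_assoc m_closed)

lemma (in group) comm_inv: "x \<in> carrier G \<Longrightarrow> y \<in> carrier G \<Longrightarrow> x \<otimes> y = y \<otimes> x \<Longrightarrow> inv x \<otimes> y = y \<otimes> inv x"
  by (metis inv_closed inv_solve_left inv_solve_right m_assoc m_closed)

lemma (in group) commg_one_iff: "x \<in> carrier G \<Longrightarrow> y \<in> carrier G \<Longrightarrow> commg G x y = \<one> \<longleftrightarrow> x \<otimes> y = y \<otimes> x"
proof -
  assume x: "x \<in> carrier G" and y: "y \<in> carrier G"
  have "commg G x y = \<one> \<longleftrightarrow> inv (y \<otimes> x) \<otimes> (x \<otimes> y) = \<one>"
    unfolding commg_def using x y by (simp add: m_assoc inv_mult_group)
  also have "\<dots> \<longleftrightarrow> \<one> = inv (y \<otimes> x) \<otimes> (x \<otimes> y)" by auto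
  also have "\<dots> \<longleftrightarrow> x \<otimes> y = (y \<otimes> x) \<otimes> \<one>"
    using x y by (intro inv_solve_left) simp_all
  also have "\<dots> \<longleftrightarrow> x \<otimes> y = y \<otimes> x" using x y by simp
  finally show ?thesis .
qed

lemma hom_conjg:
  assumes "group G" "group H" "h \<in> hom G H" "x \<in> carrier G" "g \<in> carrier G"
  shows "h (conjg G x g) = conjg H (h x) (h g)"
proof -
  interpret group_hom G H h using assms by (simp add: group_hom_def group_hom_axioms_def)
  show ?thesis unfolding conjg_def using assms by simp
qed

lemma hom_commg:
  assumes "group G" "group H" "h \<in> hom G H" "x \<in> carrier G" "g \<in> carrier G"
  shows "h (commg G x g) = commg H (h x) (h g)"
proof -
  interpret group_hom G H h using assms by (simp add: group_hom_def group_hom_axioms_def)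
  show ?thesis unfolding commg_def using assms by simp
qed

lemma conj_set_hom:
  assumes "group G" "group H" "h \<in> hom G H" "h ` carrier G = carrier H" "x \<in> carrier G"
  shows "conj_set H (h x) (carrier H) = h ` conj_set G x (carrier G)"
  unfolding conj_set_def assms(4)[symmetric] image_image
  using hom_conjg[OF assms(1-3) assms(5)] by (auto intro!: image_cong)

lemma conjcl_single: "conjcl G {x} = conj_set G x (carrier G)"
  unfolding conjcl_def conj_set_def by auto

lemma set_mult_hom:
  assumes "group G" "group H" "h \<in> hom G H" "A \<subseteq> carrier G" "B \<subseteq> carrier G"
  shows "(h ` A) <#>\<^bsub>H\<^esub> (h ` B) = h ` (A <#>\<^bsub>G\<^esub> B)"
proof -
  interpret group_hom G H h using assms by (simp add: group_hom_def group_hom_axioms_def)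
  have m: "\<And>x y. x \<in> A \<Longrightarrow> y \<in> B \<Longrightarrow> h x \<otimes>\<^bsub>H\<^esub> h y = h (x \<otimes>\<^bsub>G\<^esub> y)"
    using assms by (simp add: subsetD)
  show ?thesis unfolding set_mult_def by (auto simp: m image_UN)
qed


lemma CN_char:
  fixes G (structure)
  assumes hom: "group_hom G H h" and a: "a \<in> carrier G"
  shows "{g \<in> carrier G. h (commg G a g) = \<one>\<^bsub>H\<^esub>} = {g \<in> carrier G. h g \<in> centralizer H (h a)}"
proof -
  interpret group_hom G H h by (rule hom)
  have "\<And>g. g \<in> carrier G \<Longrightarrow> h (commg G a g) = \<one>\<^bsub>H\<^esub> \<longleftrightarrow> h g \<in> centralizer H (h a)"
  proof -
    fix g assume g: "g \<in> carrier G"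
    have "h (commg G a g) = commg H (h a) (h g)"
      using hom_commg[of G H h a g] g a G.group_axioms H.group_axioms homh by simp
    then show "h (commg G a g) = \<one>\<^bsub>H\<^esub> \<longleftrightarrow> h g \<in> centralizer H (h a)"
      using H.commg_one_iff[of "h a" "h g"] g a unfolding centralizer_def by auto
  qed
  then show ?thesis by auto
qed

lemma CN_sub:
  fixes G (structure)
  assumes hom: "group_hom G H h" and a: "a \<in> carrier G"
  shows "subgroup {g \<in> carrier G. h g \<in> centralizer H (h a)} G"
proof -
  interpret group_hom G H h by (rule hom)
  show ?thesis
  proof (rule G.subgroupI)
    show "{g \<in> carrier G. h g \<in> centralizer H (h a)} \<noteq> {}"
    proof -
      have "\<one> \<in> {g \<in> carrier G. h g \<in> centralizer H (h a)}"
        using a by (simp add: centralizer_def)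
      then show ?thesis by blast
    qed
  next
    fix x assume x: "x \<in> {g \<in> carrier G. h g \<in> centralizer H (h a)}"
    then show "inv x \<in> {g \<in> carrier G. h g \<in> centralizer H (h a)}"
      using a H.comm_inv[of "h x" "h a"] by (auto simp: centralizer_def)
  next
    fix x y assume x: "x \<in> {g \<in> carrier G. h g \<in> centralizer H (h a)}"
      and y: "y \<in> {g \<in> carrier G. h g \<in> centralizer H (h a)}"
    then show "x \<otimes> y \<in> {g \<in> carrier G. h g \<in> centralizer H (h a)}"
      using a by (auto simp: centralizer_def H.m_assoc) (metis H.m_assoc hom_closed)
  qed auto
qed


lemma count_ineq:
  fixes G (structure)
  assumes hom: "group_hom G H h" and surj: "h ` carrier G = carrier H"
    and fin: "finite (carrier G)" and a: "a \<in> carrier G"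
    and CN: "CN = {g \<in> carrier G. h g \<in> centralizer H (h a)}"
  shows "int (eta H (conjcl H {h a} <#>\<^bsub>H\<^esub> conjcl H {inv\<^bsub>H\<^esub> (h a)}))
      + int (eta G (conjcl G (conj_set G a CN <#> conj_set G (inv a) CN))) - 1
      \<le> int (eta G (conjcl G {a} <#> conjcl G {inv a}))"
proof -
  interpret group_hom G H h by (rule hom)
  have homh: "h \<in> hom G H" by (rule homh)
  define cls where "cls x = conj_set G x (carrier G)" for x
  define XX where "XX = conjcl G {a} <#> conjcl G {inv a}"
  define YY where "YY = conjcl G (conj_set G a CN <#> conj_set G (inv a) CN)"
  have clsc: "cls x \<subseteq> carrier G" if "x \<in> carrier G" for x
    using that unfolding cls_def conj_set_def by auto
  have XXc: "XX \<subseteq> carrier G"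
    unfolding XX_def conjcl_def set_mult_def using a by auto
  have Xbar: "conjcl H {h a} <#>\<^bsub>H\<^esub> conjcl H {inv\<^bsub>H\<^esub> (h a)} = h ` XX"
  proof -
    have "conjcl H {h a} = h ` conjcl G {a}"
      unfolding conjcl_single using conj_set_hom[OF G.group_axioms H.group_axioms homh surj a] .
    moreover have "conjcl H {inv\<^bsub>H\<^esub> (h a)} = h ` conjcl G {inv a}"
      unfolding conjcl_single using conj_set_hom[OF G.group_axioms H.group_axioms homh surj, of "inv a"] a
      by simp
    moreover have "conjcl G {a} \<subseteq> carrier G" "conjcl G {inv a} \<subseteq> carrier G"
      unfolding conjcl_def using a by auto
    ultimately show ?thesis unfolding XX_def
      using set_mult_hom[OF G.group_axioms H.group_axioms homh] by simp
  qed
  have CNc: "CN \<subseteq> carrier G" using CN by auto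
  have Yprop: "y \<in> XX \<and> h y = \<one>\<^bsub>H\<^esub>" if y: "y \<in> YY" for y
  proof -
    obtain c d g where c: "c \<in> CN" and d: "d \<in> CN" and g: "g \<in> carrier G"
      and yeq: "y = conjg G (conjg G a c \<otimes> conjg G (inv a) d) g"
      using y unfolding YY_def conjcl_def set_mult_def conj_set_def by auto
    have cc: "c \<in> carrier G" and dc: "d \<in> carrier G" using c d CNc by auto
    have "y = conjg G a (c \<otimes> g) \<otimes> conjg G (inv a) (d \<otimes> g)"
      using yeq a cc dc g by (simp add: G.conjg_mult G.conjg_conjg)
    moreover have "conjg G a (c \<otimes> g) \<in> conjcl G {a}"
      unfolding conjcl_def using cc g by blast
    moreover have "conjg G (inv a) (d \<otimes> g) \<in> conjcl G {inv a}"
      unfolding conjcl_def using dc g by blast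
    ultimately have yX: "y \<in> XX"
      unfolding XX_def set_mult_def by blast
    have hc: "h c \<otimes>\<^bsub>H\<^esub> h a = h a \<otimes>\<^bsub>H\<^esub> h c" using c CN by (simp add: centralizer_def)
    have hd: "h d \<otimes>\<^bsub>H\<^esub> h a = h a \<otimes>\<^bsub>H\<^esub> h d" using d CN by (simp add: centralizer_def)
    have hd': "h d \<otimes>\<^bsub>H\<^esub> inv\<^bsub>H\<^esub> h a = inv\<^bsub>H\<^esub> h a \<otimes>\<^bsub>H\<^esub> h d"
      using H.comm_inv[of "h a" "h d"] hd a dc by simp
    have "h y = conjg H (h (conjg G a c) \<otimes>\<^bsub>H\<^esub> h (conjg G (inv a) d)) (h g)"
      using yeq a cc dc g hom_conjg[OF G.group_axioms H.group_axioms homh] by simp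
    also have "\<dots> = conjg H (h a \<otimes>\<^bsub>H\<^esub> inv\<^bsub>H\<^esub> h a) (h g)"
      using a cc dc g hom_conjg[OF G.group_axioms H.group_axioms homh]
        H.conjg_comm[of "h a" "h c"] H.conjg_comm[of "inv\<^bsub>H\<^esub> h a" "h d"] hc hd' by simp
    also have "\<dots> = \<one>\<^bsub>H\<^esub>" using a g H.conjg_one by simp
    finally show ?thesis using yX by simp
  qed
  define K where "K = {cls x | x. x \<in> XX}"
  define KY where "KY = {cls y | y. y \<in> YY}"
  define Kb where "Kb = {conj_set H z (carrier H) | z. z \<in> h ` XX}"
  have etaX: "eta G XX = card K" unfolding eta_def K_def cls_def by simp
  have etaY: "eta G YY = card KY" unfolding eta_def KY_def cls_def by simp
  have etaXb: "eta H (h ` XX) = card Kb" unfolding eta_def Kb_def by simp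
  have finK: "finite K"
  proof (rule finite_subset)
    show "K \<subseteq> Pow (carrier G)" unfolding K_def using clsc XXc by auto
  qed (use fin in simp)
  have KYK: "KY \<subseteq> K" unfolding KY_def K_def using Yprop by blast
  have finKY: "finite KY" using finK KYK finite_subset by blast
  have cls_h: "conj_set H (h x) (carrier H) = h ` cls x" if "x \<in> carrier G" for x
    unfolding cls_def using conj_set_hom[OF G.group_axioms H.group_axioms homh surj that] .
  have Kbsub: "Kb \<subseteq> (\<lambda>S. h ` S) ` (K - KY) \<union> {conj_set H \<one>\<^bsub>H\<^esub> (carrier H)}"
  proof
    fix T assume "T \<in> Kb"
    then obtain x where x: "x \<in> XX" and T: "T = h ` cls x"
      unfolding Kb_def using cls_h XXc by auto
    show "T \<in> (\<lambda>S. h ` S) ` (K - KY) \<union> {conj_set H \<one>\<^bsub>H\<^esub> (carrier H)}"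
    proof (cases "cls x \<in> KY")
      case True
      then obtain y where y: "y \<in> YY" and e: "cls x = cls y" unfolding KY_def by auto
      have "y \<in> carrier G" using Yprop[OF y] XXc by auto
      then have "T = conj_set H (h y) (carrier H)" using T e cls_h by simp
      then show ?thesis using Yprop[OF y] by simp
    next
      case False
      moreover have "cls x \<in> K" unfolding K_def using x by blast
      ultimately show ?thesis using T by blast
    qed
  qed
  have "card Kb \<le> card ((\<lambda>S. h ` S) ` (K - KY) \<union> {conj_set H \<one>\<^bsub>H\<^esub> (carrier H)})"
    using Kbsub finK by (intro card_mono) auto
  also have "\<dots> \<le> card ((\<lambda>S. h ` S) ` (K - KY)) + 1"
    using card_Un_le[of "(\<lambda>S. h ` S) ` (K - KY)" "{conj_set H \<one>\<^bsub>H\<^esub> (carrier H)}"] by simp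
  also have "\<dots> \<le> card (K - KY) + 1" by (intro add_right_mono card_image_le) (use finK in auto)
  also have "\<dots> = card K - card KY + 1" using card_Diff_subset[OF finKY KYK] by simp
  finally have "card Kb \<le> card K - card KY + 1" .
  moreover have "card KY \<le> card K" using card_mono[OF finK KYK] .
  ultimately have "int (card Kb) + int (card KY) - 1 \<le> int (card K)" by linarith
  then show ?thesis using etaX etaY etaXb Xbar unfolding XX_def YY_def by simp
qed


theorem lemma4p2:
  fixes G (structure) and N :: "'a set" and a :: 'a
  assumes "group G" and "finite (carrier G)" and "solvable G"
    and "N \<lhd> G" and "a \<in> carrier G"
  defines "C \<equiv> centralizer G a"
    and "CN \<equiv> {g \<in> carrier G. commg G a g \<in> N}"
  shows "subgroup CN G
    \<and> C <#> N \<subseteq> CN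
    \<and> (\<lambda>g. N #> g) ` CN = centralizer (G Mod N) (N #> a)
    \<and> int (eta (G Mod N) (conjcl (G Mod N) {N #> a} <#>\<^bsub>G Mod N\<^esub>
                            conjcl (G Mod N) {inv\<^bsub>G Mod N\<^esub> (N #> a)}))
      + int (eta G (conjcl G (conj_set G a CN <#> conj_set G (inv a) CN))) - 1
      \<le> int (eta G (conjcl G {a} <#> conjcl G {inv a}))"
proof -
  interpret normal N G by (rule assms(4))
  define h where "h = (\<lambda>g. N #> g)"
  have hom: "group_hom G (G Mod N) h"
    unfolding group_hom_def group_hom_axioms_def h_def
    using factorgroup_is_group r_coset_hom_Mod is_group by blast
  interpret Q: group_hom G "G Mod N" h by (rule hom)
  have surj: "h ` carrier G = carrier (G Mod N)"
    unfolding h_def carrier_FactGroup by simp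
  have ker: "h x = \<one>\<^bsub>G Mod N\<^esub> \<longleftrightarrow> x \<in> N" if x: "x \<in> carrier G" for x
  proof
    assume "h x = \<one>\<^bsub>G Mod N\<^esub>"
    then have "N #> x = N" unfolding h_def by simp
    then show "x \<in> N" using rcos_self[OF x subgroup_axioms] by simp
  next
    assume "x \<in> N"
    then show "h x = \<one>\<^bsub>G Mod N\<^esub>" unfolding h_def using rcos_const[OF is_group] by simp
  qed
  have CN2: "CN = {g \<in> carrier G. h g \<in> centralizer (G Mod N) (h a)}"
  proof -
    have "CN = {g \<in> carrier G. h (commg G a g) = \<one>\<^bsub>G Mod N\<^esub>}"
    proof -
      have "commg G a g \<in> carrier G" if "g \<in> carrier G" for g
        using that assms(5) unfolding commg_def by simp
      then show ?thesis unfolding CN_def using ker by blast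
    qed
    then show ?thesis using CN_char[OF hom assms(5)] by simp
  qed
  have P1: "subgroup CN G" using CN2 CN_sub[OF hom assms(5)] by simp
  have P2: "C <#> N \<subseteq> CN"
  proof
    fix y assume "y \<in> C <#> N"
    then obtain c n where c: "c \<in> C" and n: "n \<in> N" and y: "y = c \<otimes> n"
      unfolding set_mult_def by auto
    have cc: "c \<in> carrier G" using c unfolding C_def centralizer_def by auto
    have nc: "n \<in> carrier G" using n subset by auto
    have hn: "h n = \<one>\<^bsub>G Mod N\<^esub>" using ker[OF nc] n by blast
    have hy: "h y = h c"
      by (metis y cc nc hn Q.hom_mult Q.hom_closed Q.H.r_one)
    have "h c \<otimes>\<^bsub>G Mod N\<^esub> h a = h a \<otimes>\<^bsub>G Mod N\<^esub> h c"
    proof -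
      have ca: "c \<otimes> a = a \<otimes> c" using c unfolding C_def centralizer_def by simp
      show ?thesis using Q.hom_mult[OF cc assms(5)] Q.hom_mult[OF assms(5) cc] ca by metis
    qed
    then show "y \<in> CN" unfolding CN2 centralizer_def using hy y cc nc assms(5) by simp
  qed
  have P3: "h ` CN = centralizer (G Mod N) (h a)"
  proof -
    have "centralizer (G Mod N) (h a) \<subseteq> h ` carrier G"
      using surj unfolding centralizer_def by auto
    then show ?thesis unfolding CN2 by auto
  qed
  note P4 = count_ineq[OF hom surj assms(2) assms(5) CN2]
  show ?thesis using P1 P2 P3 P4 unfolding h_def by blast
qed

end
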